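(* Let $\succ$ be a binary relation on $\mathcal{F}$ satisfying Axioms A1–A7 below, and define $\succsim$ on $X$ by $x\succsim y$ iff $y\not\succ x$. Let $f,g\in\mathcal{F}$ with $f(s)\succsim g(s)$ for all $s\in S$, and let $x\in X$. If $x\Join f$, then $g\not\succ x$; and if $x\Join g$, then $x\not\succ f$. Axioms: (A1) $\succ$ is asymmetric and transitive, and its restriction to $X$ is non-trivial and negatively transitive. (A2) For all $f,g,h\in\mathcal{F}$, $\{\alpha\in[0,1]:\alpha f+(1-\alpha)g\succ h\}$ and $\{\alpha\in[0,1]:h\succ\alpha f+(1-\alpha)g\}$ are open in $[0,1]$. (A3) For all $f,g\in\mathcal{F}$, $x\in X$, $\alpha\in(0,1)$: $f\succ g$ iff $\alpha f+(1-\alpha)x\succ\alpha g+(1-\alpha)x$. (A4) For all $x\in X$, $\{f:f\succ x\}$ and $\{f:x\succ f\}$ are convex. (A5) If $f(s)\succ g(s)$ for all $s\in S$ then $f\succ g$. (A6) If for all $x\in X$, $f\Join x$ implies $g\Join x$, then $f\Join g$. (A7) If $f\Join x$, $x\succ g$, $g\Join y$, $f\succ y$ (with $x,y\in X$), then $f\succ g$.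
   Context: $S$ is a set of states with algebra $\Sigma$; $X$ is a non-singleton convex subset of a real vector space; $\mathcal{F}$ is the set of simple acts $f:S\to X$ ($\Sigma$-measurable, finitely many values) with pointwise mixtures; elements of $X$ are identified with constant acts. $f\Join g$ means $f\not\succ g$ and $g\not\succ f$. *)

theory Defs
  imports "HOL-Analysis.Analysis"
begin

text \<open>States are the elements of the type 's (S = UNIV); Sigma is an algebra on S.
  Outcomes lie in a convex set X of a real vector space 'x.\<close>

definition acts :: "'s set set \<Rightarrow> 'x set \<Rightarrow> ('s \<Rightarrow> 'x) set" where
  "acts Sig X = {f. (\<forall>s. f s \<in> X) \<and> finite (range f) \<and> (\<forall>x. f -` {x} \<in> Sig)}"

definition cst :: "'x \<Rightarrow> 's \<Rightarrow> 'x" where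
  "cst x = (\<lambda>_. x)"

definition mix :: "real \<Rightarrow> ('s \<Rightarrow> 'x::real_vector) \<Rightarrow> ('s \<Rightarrow> 'x) \<Rightarrow> 's \<Rightarrow> 'x" where
  "mix a f g = (\<lambda>s. a *\<^sub>R f s + (1 - a) *\<^sub>R g s)"

definition incomp :: "('a \<Rightarrow> 'a \<Rightarrow> bool) \<Rightarrow> 'a \<Rightarrow> 'a \<Rightarrow> bool" where
  "incomp P f g \<longleftrightarrow> \<not> P f g \<and> \<not> P g f"

definition A1 :: "'s set set \<Rightarrow> 'x set \<Rightarrow> (('s \<Rightarrow> 'x) \<Rightarrow> ('s \<Rightarrow> 'x) \<Rightarrow> bool) \<Rightarrow> bool" where
  "A1 Sig X P \<longleftrightarrow>
     (\<forall>f\<in>acts Sig X. \<forall>g\<in>acts Sig X. P f g \<longrightarrow> \<not> P g f) \<and>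
     (\<forall>f\<in>acts Sig X. \<forall>g\<in>acts Sig X. \<forall>h\<in>acts Sig X. P f g \<longrightarrow> P g h \<longrightarrow> P f h) \<and>
     (\<exists>x\<in>X. \<exists>y\<in>X. P (cst x) (cst y)) \<and>
     (\<forall>x\<in>X. \<forall>y\<in>X. \<forall>z\<in>X. P (cst x) (cst y) \<longrightarrow> P (cst x) (cst z) \<or> P (cst z) (cst y))"

definition A2 :: "'s set set \<Rightarrow> 'x::real_vector set \<Rightarrow> (('s \<Rightarrow> 'x) \<Rightarrow> ('s \<Rightarrow> 'x) \<Rightarrow> bool) \<Rightarrow> bool" where
  "A2 Sig X P \<longleftrightarrow>
     (\<forall>f\<in>acts Sig X. \<forall>g\<in>acts Sig X. \<forall>h\<in>acts Sig X.
        openin (top_of_set {0..1}) {a\<in>{0..1::real}. P (mix a f g) h} \<and>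
        openin (top_of_set {0..1}) {a\<in>{0..1::real}. P h (mix a f g)})"

definition A3 :: "'s set set \<Rightarrow> 'x::real_vector set \<Rightarrow> (('s \<Rightarrow> 'x) \<Rightarrow> ('s \<Rightarrow> 'x) \<Rightarrow> bool) \<Rightarrow> bool" where
  "A3 Sig X P \<longleftrightarrow>
     (\<forall>f\<in>acts Sig X. \<forall>g\<in>acts Sig X. \<forall>x\<in>X. \<forall>a\<in>{0<..<1::real}.
        P f g \<longleftrightarrow> P (mix a f (cst x)) (mix a g (cst x)))"

definition A4 :: "'s set set \<Rightarrow> 'x::real_vector set \<Rightarrow> (('s \<Rightarrow> 'x) \<Rightarrow> ('s \<Rightarrow> 'x) \<Rightarrow> bool) \<Rightarrow> bool" where
  "A4 Sig X P \<longleftrightarrow>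
     (\<forall>x\<in>X. \<forall>f\<in>acts Sig X. \<forall>g\<in>acts Sig X. \<forall>a\<in>{0..1::real}.
        (P f (cst x) \<longrightarrow> P g (cst x) \<longrightarrow> P (mix a f g) (cst x)) \<and>
        (P (cst x) f \<longrightarrow> P (cst x) g \<longrightarrow> P (cst x) (mix a f g)))"

definition A5 :: "'s set set \<Rightarrow> 'x set \<Rightarrow> (('s \<Rightarrow> 'x) \<Rightarrow> ('s \<Rightarrow> 'x) \<Rightarrow> bool) \<Rightarrow> bool" where
  "A5 Sig X P \<longleftrightarrow>
     (\<forall>f\<in>acts Sig X. \<forall>g\<in>acts Sig X. (\<forall>s. P (cst (f s)) (cst (g s))) \<longrightarrow> P f g)"

definition A6 :: "'s set set \<Rightarrow> 'x set \<Rightarrow> (('s \<Rightarrow> 'x) \<Rightarrow> ('s \<Rightarrow> 'x) \<Rightarrow> bool) \<Rightarrow> bool" where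
  "A6 Sig X P \<longleftrightarrow>
     (\<forall>f\<in>acts Sig X. \<forall>g\<in>acts Sig X.
        (\<forall>x\<in>X. incomp P f (cst x) \<longrightarrow> incomp P g (cst x)) \<longrightarrow> incomp P f g)"

definition A7 :: "'s set set \<Rightarrow> 'x set \<Rightarrow> (('s \<Rightarrow> 'x) \<Rightarrow> ('s \<Rightarrow> 'x) \<Rightarrow> bool) \<Rightarrow> bool" where
  "A7 Sig X P \<longleftrightarrow>
     (\<forall>f\<in>acts Sig X. \<forall>g\<in>acts Sig X. \<forall>x\<in>X. \<forall>y\<in>X.
        incomp P f (cst x) \<longrightarrow> P (cst x) g \<longrightarrow> incomp P g (cst y) \<longrightarrow> P f (cst y) \<longrightarrow> P f g)"

definition weakpref :: "(('s \<Rightarrow> 'x) \<Rightarrow> ('s \<Rightarrow> 'x) \<Rightarrow> bool) \<Rightarrow> 'x \<Rightarrow> 'x \<Rightarrow> bool" where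
  "weakpref P x y \<longleftrightarrow> \<not> P (cst y) (cst x)"

end

theory Submission
  imports Defs
begin

lemma mix_apply: "mix a f g s = a *\<^sub>R f s + (1 - a) *\<^sub>R g s"
  by (simp add: mix_def)

lemma mix_cst: "mix a (cst u) (cst v) = cst (a *\<^sub>R u + (1 - a) *\<^sub>R v)"
  by (simp add: mix_def cst_def)

lemma mix_same: "mix a (cst u) (cst u) = cst u"
  by (simp add: mix_def cst_def algebra_simps)

lemma mix_one: "mix 1 f g = f"
  by (simp add: mix_def)

lemma mix_zero: "mix 0 f g = g"
  by (simp add: mix_def)

lemma cst_acts:
  fixes Sig :: "'s set set" and c :: 'x
  assumes "algebra UNIV Sig" "c \<in> X"
  shows "(cst c :: 's \<Rightarrow> 'x) \<in> acts Sig X"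
proof -
  have "cst c -` {y} \<in> Sig" for y
  proof (cases "c = y")
    case True
    then have "(cst c :: 's \<Rightarrow> 'x) -` {y} = UNIV" by (auto simp: cst_def)
    then show ?thesis using algebra.top[OF assms(1)] by simp
  next
    case False
    then have "(cst c :: 's \<Rightarrow> 'x) -` {y} = {}" by (auto simp: cst_def)
    then show ?thesis using algebra.compl_sets[OF assms(1) algebra.top[OF assms(1)]] by simp
  qed
  moreover have "range (cst c) = {c}" by (auto simp: cst_def)
  ultimately show ?thesis using assms(2) by (auto simp: acts_def cst_def)
qed

lemma mix_acts:
  assumes "convex X" "f \<in> acts Sig X" "c \<in> X" "0 < a" "a \<le> 1"
  shows "mix a f (cst c) \<in> acts Sig X"
proof -
  have vals: "\<forall>s. f s \<in> X" "finite (range f)" "\<forall>y. f -` {y} \<in> Sig"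
    using assms(2) by (auto simp: acts_def)
  have "mix a f (cst c) s \<in> X" for s
    using assms(1) vals(1) assms(3-5) unfolding mix_apply cst_def convex_def by auto
  moreover have "range (mix a f (cst c)) = (\<lambda>v. a *\<^sub>R v + (1 - a) *\<^sub>R c) ` range f"
    by (auto simp: mix_def cst_def)
  moreover have "mix a f (cst c) -` {y} = f -` {inverse a *\<^sub>R (y - (1 - a) *\<^sub>R c)}" for y
  proof -
    have "a *\<^sub>R f s + (1 - a) *\<^sub>R c = y \<longleftrightarrow> f s = inverse a *\<^sub>R (y - (1 - a) *\<^sub>R c)" for s
    proof
      assume "a *\<^sub>R f s + (1 - a) *\<^sub>R c = y"
      then have "a *\<^sub>R f s = y - (1 - a) *\<^sub>R c" by (simp add: algebra_simps)
      then show "f s = inverse a *\<^sub>R (y - (1 - a) *\<^sub>R c)" using assms(4)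
        by (metis less_irrefl scaleR_left_imp_eq scaleR_scaleR right_inverse scaleR_one)
    next
      assume "f s = inverse a *\<^sub>R (y - (1 - a) *\<^sub>R c)"
      then have "a *\<^sub>R f s = y - (1 - a) *\<^sub>R c" using assms(4) by simp
      then show "a *\<^sub>R f s + (1 - a) *\<^sub>R c = y" by (simp add: algebra_simps)
    qed
    then show ?thesis by (auto simp: mix_def cst_def)
  qed
  ultimately show ?thesis using vals by (auto simp: acts_def)
qed

lemma open_near1:
  assumes "openin (top_of_set {0..1}) U" "(1::real) \<in> U"
  shows "\<exists>a. 0 < a \<and> a < 1 \<and> a \<in> U"
proof -
  obtain e where e: "e > 0" "\<forall>x'\<in>{0..1}. dist x' 1 < e \<longrightarrow> x' \<in> U"
    using assms openin_euclidean_subtopology_iff by metis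
  define a where "a = max (1/2) (1 - e/2)"
  have "0 < a" "a < 1" "a \<in> {0..1}" "dist a 1 < e" using e(1)
    by (auto simp: a_def dist_real_def)
  then show ?thesis using e(2) by blast
qed

lemma open_near0:
  assumes "openin (top_of_set {0..1}) U" "(0::real) \<in> U"
  shows "\<exists>a. 0 < a \<and> a < 1 \<and> a \<in> U"
proof -
  obtain e where e: "e > 0" "\<forall>x'\<in>{0..1}. dist x' 0 < e \<longrightarrow> x' \<in> U"
    using assms openin_euclidean_subtopology_iff by metis
  define a where "a = min (1/2) (e/2)"
  have "0 < a" "a < 1" "a \<in> {0..1}" "dist a 0 < e" using e(1)
    by (auto simp: a_def dist_real_def)
  then show ?thesis using e(2) by blast
qed


lemma core_up:
  fixes Sig :: "'s set set" and X :: "'x::real_vector set"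
    and P :: "('s \<Rightarrow> 'x) \<Rightarrow> ('s \<Rightarrow> 'x) \<Rightarrow> bool"
    and f g :: "'s \<Rightarrow> 'x" and c w :: 'x
  assumes alg: "algebra UNIV Sig" and cvx: "convex X"
    and a1: "A1 Sig X P" and a2: "A2 Sig X P" and a3: "A3 Sig X P" and a5: "A5 Sig X P"
    and fa: "f \<in> acts Sig X" and ga: "g \<in> acts Sig X"
    and wp: "\<forall>s. weakpref P (f s) (g s)"
    and cX: "c \<in> X" and wX: "w \<in> X"
    and gc: "P g (cst c)" and cw: "P (cst c) (cst w)"
  shows "P f (cst c)"
proof -
  have trans: "\<And>f g h. f \<in> acts Sig X \<Longrightarrow> g \<in> acts Sig X \<Longrightarrow> h \<in> acts Sig X \<Longrightarrow> P f g \<Longrightarrow> P g h \<Longrightarrow> P f h"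
  proof -
    fix f g h assume "f \<in> acts Sig X" "g \<in> acts Sig X" "h \<in> acts Sig X" "P f g" "P g h"
    moreover have "\<forall>f\<in>acts Sig X. \<forall>g\<in>acts Sig X. \<forall>h\<in>acts Sig X. P f g \<longrightarrow> P g h \<longrightarrow> P f h"
      using a1 unfolding A1_def by (elim conjE)
    ultimately show "P f h" by blast
  qed
  have nt: "\<And>x y z. x \<in> X \<Longrightarrow> y \<in> X \<Longrightarrow> z \<in> X \<Longrightarrow> P (cst x) (cst y) \<Longrightarrow> P (cst x) (cst z) \<or> P (cst z) (cst y)"
  proof -
    fix x y z assume "x \<in> X" "y \<in> X" "z \<in> X" "P (cst x) (cst y)"
    moreover have "\<forall>x\<in>X. \<forall>y\<in>X. \<forall>z\<in>X. P (cst x) (cst y) \<longrightarrow> P (cst x) (cst z) \<or> P (cst z) (cst y)"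
      using a1 unfolding A1_def by (elim conjE)
    ultimately show "P (cst x) (cst z) \<or> P (cst z) (cst y)" by blast
  qed
  have ind: "\<And>f g x a. f \<in> acts Sig X \<Longrightarrow> g \<in> acts Sig X \<Longrightarrow> x \<in> X \<Longrightarrow> 0 < a \<Longrightarrow> a < 1 \<Longrightarrow>
      P f g \<longleftrightarrow> P (mix a f (cst x)) (mix a g (cst x))"
    using a3 unfolding A3_def by (simp add: greaterThanLessThan_iff)
  have mono: "\<And>f g. f \<in> acts Sig X \<Longrightarrow> g \<in> acts Sig X \<Longrightarrow> (\<forall>s. P (cst (f s)) (cst (g s))) \<Longrightarrow> P f g"
    using a5 unfolding A5_def by blast
  have fX: "\<And>s. f s \<in> X" and gX: "\<And>s. g s \<in> X" using fa ga by (auto simp: acts_def)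
  have cv: "\<And>u v a. u \<in> X \<Longrightarrow> v \<in> X \<Longrightarrow> 0 \<le> a \<Longrightarrow> a \<le> 1 \<Longrightarrow> a *\<^sub>R u + (1 - a) *\<^sub>R v \<in> X"
    using cvx unfolding convex_def by auto
  have ca: "\<And>u. u \<in> X \<Longrightarrow> cst u \<in> acts Sig X" by (rule cst_acts[OF alg])
  have pt: "P (cst (mix a f (cst c) s)) (cst (mix a g (cst w) s))" if a: "0 < a" "a < 1" for a s
  proof -
    define u where "u = f s"
    define v where "v = g s"
    have uX: "u \<in> X" and vX: "v \<in> X" using fX gX u_def v_def by auto
    have nvu: "\<not> P (cst v) (cst u)" using wp by (simp add: weakpref_def u_def v_def)
    have h1: "\<not> P (cst (a *\<^sub>R v + (1 - a) *\<^sub>R c)) (cst (a *\<^sub>R u + (1 - a) *\<^sub>R c))"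
      using ind[OF ca[OF vX] ca[OF uX] cX a] nvu by (simp add: mix_cst)
    have h2pre: "P (mix (1 - a) (cst c) (cst v)) (mix (1 - a) (cst w) (cst v))"
      using ind[OF ca[OF cX] ca[OF wX] vX, of "1 - a"] a cw by simp
    have h2: "P (cst (a *\<^sub>R v + (1 - a) *\<^sub>R c)) (cst (a *\<^sub>R v + (1 - a) *\<^sub>R w))"
    proof -
      have "(1 - a) *\<^sub>R c + (1 - (1 - a)) *\<^sub>R v = a *\<^sub>R v + (1 - a) *\<^sub>R c"
           "(1 - a) *\<^sub>R w + (1 - (1 - a)) *\<^sub>R v = a *\<^sub>R v + (1 - a) *\<^sub>R w" by simp_all
      then show ?thesis using h2pre by (simp only: mix_cst)
    qed
    have "P (cst (a *\<^sub>R u + (1 - a) *\<^sub>R c)) (cst (a *\<^sub>R v + (1 - a) *\<^sub>R w))"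
    proof -
      have a01: "0 \<le> a" "a \<le> 1" using a by auto
      show ?thesis using nt[OF cv[OF vX cX a01] cv[OF vX wX a01] cv[OF uX cX a01] h2] h1 by blast
    qed
    moreover have "mix a f (cst c) s = a *\<^sub>R u + (1 - a) *\<^sub>R c" "mix a g (cst w) s = a *\<^sub>R v + (1 - a) *\<^sub>R w"
      by (simp_all add: mix_apply cst_def u_def v_def)
    ultimately show ?thesis by simp
  qed
  have "openin (top_of_set {0..1}) {a\<in>{0..1::real}. P (mix a g (cst w)) (cst c)}"
  proof -
    have "\<forall>f\<in>acts Sig X. \<forall>g\<in>acts Sig X. \<forall>h\<in>acts Sig X.
        openin (top_of_set {0..1}) {a\<in>{0..1::real}. P (mix a f g) h}"
      using a2 unfolding A2_def by blast
    then show ?thesis using ga ca[OF wX] ca[OF cX] by blast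
  qed
  moreover have "1 \<in> {a\<in>{0..1::real}. P (mix a g (cst w)) (cst c)}" using gc by (simp add: mix_one)
  ultimately obtain a where a: "0 < a" "a < 1" "P (mix a g (cst w)) (cst c)"
    using open_near1 by blast
  have fa': "mix a f (cst c) \<in> acts Sig X" using mix_acts[OF cvx fa cX] a by auto
  have ga': "mix a g (cst w) \<in> acts Sig X" using mix_acts[OF cvx ga wX] a by auto
  have "P (mix a f (cst c)) (mix a g (cst w))" using mono[OF fa' ga'] pt a by blast
  then have "P (mix a f (cst c)) (cst c)" using trans[OF fa' ga' ca[OF cX]] a by blast
  then show ?thesis using ind[OF fa ca[OF cX] cX a(1,2)] by (simp add: mix_same)
qed

lemma core_down:
  fixes Sig :: "'s set set" and X :: "'x::real_vector set"
    and P :: "('s \<Rightarrow> 'x) \<Rightarrow> ('s \<Rightarrow> 'x) \<Rightarrow> bool"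
    and f g :: "'s \<Rightarrow> 'x" and c w :: 'x
  assumes alg: "algebra UNIV Sig" and cvx: "convex X"
    and a1: "A1 Sig X P" and a2: "A2 Sig X P" and a3: "A3 Sig X P" and a5: "A5 Sig X P"
    and fa: "f \<in> acts Sig X" and ga: "g \<in> acts Sig X"
    and wp: "\<forall>s. weakpref P (f s) (g s)"
    and cX: "c \<in> X" and wX: "w \<in> X"
    and gc: "P (cst c) f" and cw: "P (cst w) (cst c)"
  shows "P (cst c) g"
proof -
  have trans: "\<And>f g h. f \<in> acts Sig X \<Longrightarrow> g \<in> acts Sig X \<Longrightarrow> h \<in> acts Sig X \<Longrightarrow> P f g \<Longrightarrow> P g h \<Longrightarrow> P f h"
  proof -
    fix f g h assume "f \<in> acts Sig X" "g \<in> acts Sig X" "h \<in> acts Sig X" "P f g" "P g h"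
    moreover have "\<forall>f\<in>acts Sig X. \<forall>g\<in>acts Sig X. \<forall>h\<in>acts Sig X. P f g \<longrightarrow> P g h \<longrightarrow> P f h"
      using a1 unfolding A1_def by (elim conjE)
    ultimately show "P f h" by blast
  qed
  have nt: "\<And>x y z. x \<in> X \<Longrightarrow> y \<in> X \<Longrightarrow> z \<in> X \<Longrightarrow> P (cst x) (cst y) \<Longrightarrow> P (cst x) (cst z) \<or> P (cst z) (cst y)"
  proof -
    fix x y z assume "x \<in> X" "y \<in> X" "z \<in> X" "P (cst x) (cst y)"
    moreover have "\<forall>x\<in>X. \<forall>y\<in>X. \<forall>z\<in>X. P (cst x) (cst y) \<longrightarrow> P (cst x) (cst z) \<or> P (cst z) (cst y)"
      using a1 unfolding A1_def by (elim conjE)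
    ultimately show "P (cst x) (cst z) \<or> P (cst z) (cst y)" by blast
  qed
  have ind: "\<And>f g x a. f \<in> acts Sig X \<Longrightarrow> g \<in> acts Sig X \<Longrightarrow> x \<in> X \<Longrightarrow> 0 < a \<Longrightarrow> a < 1 \<Longrightarrow>
      P f g \<longleftrightarrow> P (mix a f (cst x)) (mix a g (cst x))"
    using a3 unfolding A3_def by (simp add: greaterThanLessThan_iff)
  have mono: "\<And>f g. f \<in> acts Sig X \<Longrightarrow> g \<in> acts Sig X \<Longrightarrow> (\<forall>s. P (cst (f s)) (cst (g s))) \<Longrightarrow> P f g"
    using a5 unfolding A5_def by blast
  have fX: "\<And>s. f s \<in> X" and gX: "\<And>s. g s \<in> X" using fa ga by (auto simp: acts_def)
  have cv: "\<And>u v a. u \<in> X \<Longrightarrow> v \<in> X \<Longrightarrow> 0 \<le> a \<Longrightarrow> a \<le> 1 \<Longrightarrow> a *\<^sub>R u + (1 - a) *\<^sub>R v \<in> X"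
    using cvx unfolding convex_def by auto
  have ca: "\<And>u. u \<in> X \<Longrightarrow> cst u \<in> acts Sig X" by (rule cst_acts[OF alg])
  have pt: "P (cst (mix a f (cst w) s)) (cst (mix a g (cst c) s))" if a: "0 < a" "a < 1" for a s
  proof -
    define u where "u = f s"
    define v where "v = g s"
    have uX: "u \<in> X" and vX: "v \<in> X" using fX gX u_def v_def by auto
    have nvu: "\<not> P (cst v) (cst u)" using wp by (simp add: weakpref_def u_def v_def)
    have h1: "\<not> P (cst (a *\<^sub>R v + (1 - a) *\<^sub>R c)) (cst (a *\<^sub>R u + (1 - a) *\<^sub>R c))"
      using ind[OF ca[OF vX] ca[OF uX] cX a] nvu by (simp add: mix_cst)
    have h2pre: "P (mix (1 - a) (cst w) (cst u)) (mix (1 - a) (cst c) (cst u))"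
      using ind[OF ca[OF wX] ca[OF cX] uX, of "1 - a"] a cw by simp
    have h2: "P (cst (a *\<^sub>R u + (1 - a) *\<^sub>R w)) (cst (a *\<^sub>R u + (1 - a) *\<^sub>R c))"
    proof -
      have "(1 - a) *\<^sub>R c + (1 - (1 - a)) *\<^sub>R u = a *\<^sub>R u + (1 - a) *\<^sub>R c"
           "(1 - a) *\<^sub>R w + (1 - (1 - a)) *\<^sub>R u = a *\<^sub>R u + (1 - a) *\<^sub>R w" by simp_all
      then show ?thesis using h2pre by (simp only: mix_cst)
    qed
    have "P (cst (a *\<^sub>R u + (1 - a) *\<^sub>R w)) (cst (a *\<^sub>R v + (1 - a) *\<^sub>R c))"
    proof -
      have a01: "0 \<le> a" "a \<le> 1" using a by auto
      show ?thesis using nt[OF cv[OF uX wX a01] cv[OF uX cX a01] cv[OF vX cX a01] h2] h1 by blast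
    qed
    moreover have "mix a f (cst w) s = a *\<^sub>R u + (1 - a) *\<^sub>R w" "mix a g (cst c) s = a *\<^sub>R v + (1 - a) *\<^sub>R c"
      by (simp_all add: mix_apply cst_def u_def v_def)
    ultimately show ?thesis by simp
  qed
  have "openin (top_of_set {0..1}) {a\<in>{0..1::real}. P (cst c) (mix a f (cst w))}"
  proof -
    have "\<forall>f\<in>acts Sig X. \<forall>g\<in>acts Sig X. \<forall>h\<in>acts Sig X.
        openin (top_of_set {0..1}) {a\<in>{0..1::real}. P h (mix a f g)}"
      using a2 unfolding A2_def by blast
    then show ?thesis using fa ca[OF wX] ca[OF cX] by blast
  qed
  moreover have "1 \<in> {a\<in>{0..1::real}. P (cst c) (mix a f (cst w))}" using gc by (simp add: mix_one)
  ultimately obtain a where a: "0 < a" "a < 1" "P (cst c) (mix a f (cst w))"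
    using open_near1 by blast
  have fa': "mix a f (cst w) \<in> acts Sig X" using mix_acts[OF cvx fa wX] a by auto
  have ga': "mix a g (cst c) \<in> acts Sig X" using mix_acts[OF cvx ga cX] a by auto
  have "P (mix a f (cst w)) (mix a g (cst c))" using mono[OF fa' ga'] pt a by blast
  then have "P (cst c) (mix a g (cst c))" using trans[OF ca[OF cX] fa' ga'] a by blast
  then show ?thesis using ind[OF ca[OF cX] ga cX a(1,2)] by (simp add: mix_same)
qed


theorem lemma4:
  fixes Sig :: "'s set set" and X :: "'x::real_vector set"
    and P :: "('s \<Rightarrow> 'x) \<Rightarrow> ('s \<Rightarrow> 'x) \<Rightarrow> bool"
    and f g :: "'s \<Rightarrow> 'x" and x :: 'x
  assumes "algebra UNIV Sig"
    and "convex X" and "\<exists>a\<in>X. \<exists>b\<in>X. a \<noteq> b"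
    and "A1 Sig X P" and "A2 Sig X P" and "A3 Sig X P" and "A4 Sig X P"
    and "A5 Sig X P" and "A6 Sig X P" and "A7 Sig X P"
    and "f \<in> acts Sig X" and "g \<in> acts Sig X"
    and "\<forall>s. weakpref P (f s) (g s)"
    and "x \<in> X"
  shows "(incomp P (cst x) f \<longrightarrow> \<not> P g (cst x)) \<and>
         (incomp P (cst x) g \<longrightarrow> \<not> P (cst x) f)"
proof -
  note alg = assms(1) and cvx = assms(2) and a1 = assms(4) and a2 = assms(5) and a3 = assms(6)
    and a5 = assms(8) and fa = assms(11) and ga = assms(12) and wp = assms(13) and xX = assms(14)
  have trans: "\<And>f g h. f \<in> acts Sig X \<Longrightarrow> g \<in> acts Sig X \<Longrightarrow> h \<in> acts Sig X \<Longrightarrow> P f g \<Longrightarrow> P g h \<Longrightarrow> P f h"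
  proof -
    fix f g h assume "f \<in> acts Sig X" "g \<in> acts Sig X" "h \<in> acts Sig X" "P f g" "P g h"
    moreover have "\<forall>f\<in>acts Sig X. \<forall>g\<in>acts Sig X. \<forall>h\<in>acts Sig X. P f g \<longrightarrow> P g h \<longrightarrow> P f h"
      using a1 unfolding A1_def by (elim conjE)
    ultimately show "P f h" by blast
  qed
  have nt: "\<And>x y z. x \<in> X \<Longrightarrow> y \<in> X \<Longrightarrow> z \<in> X \<Longrightarrow> P (cst x) (cst y) \<Longrightarrow> P (cst x) (cst z) \<or> P (cst z) (cst y)"
  proof -
    fix x y z assume "x \<in> X" "y \<in> X" "z \<in> X" "P (cst x) (cst y)"
    moreover have "\<forall>x\<in>X. \<forall>y\<in>X. \<forall>z\<in>X. P (cst x) (cst y) \<longrightarrow> P (cst x) (cst z) \<or> P (cst z) (cst y)"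
      using a1 unfolding A1_def by (elim conjE)
    ultimately show "P (cst x) (cst z) \<or> P (cst z) (cst y)" by blast
  qed
  obtain y1 y2 where y: "y1 \<in> X" "y2 \<in> X" "P (cst y1) (cst y2)"
    using a1 unfolding A1_def by (elim conjE) blast
  have ind: "\<And>f g x a. f \<in> acts Sig X \<Longrightarrow> g \<in> acts Sig X \<Longrightarrow> x \<in> X \<Longrightarrow> 0 < a \<Longrightarrow> a < 1 \<Longrightarrow>
      P f g \<longleftrightarrow> P (mix a f (cst x)) (mix a g (cst x))"
    using a3 unfolding A3_def by (simp add: greaterThanLessThan_iff)
  have cv: "\<And>u v a. u \<in> X \<Longrightarrow> v \<in> X \<Longrightarrow> 0 \<le> a \<Longrightarrow> a \<le> 1 \<Longrightarrow> a *\<^sub>R u + (1 - a) *\<^sub>R v \<in> X"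
    using cvx unfolding convex_def by auto
  have ca: "\<And>u. u \<in> X \<Longrightarrow> cst u \<in> acts Sig X" by (rule cst_acts[OF alg])
  have A2a: "\<forall>f\<in>acts Sig X. \<forall>g\<in>acts Sig X. \<forall>h\<in>acts Sig X.
        openin (top_of_set {0..1}) {a\<in>{0..1::real}. P (mix a f g) h}"
    using a2 unfolding A2_def by blast
  have A2b: "\<forall>f\<in>acts Sig X. \<forall>g\<in>acts Sig X. \<forall>h\<in>acts Sig X.
        openin (top_of_set {0..1}) {a\<in>{0..1::real}. P h (mix a f g)}"
    using a2 unfolding A2_def by blast
  have part1: "\<not> P g (cst x)" if inc: "incomp P (cst x) f"
  proof
    assume gx: "P g (cst x)"
    show False
    proof (cases "\<exists>w\<in>X. P (cst x) (cst w)")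
      case True
      then obtain w where w: "w \<in> X" "P (cst x) (cst w)" by blast
      have "P f (cst x)" using core_up[OF alg cvx a1 a2 a3 a5 fa ga wp xX w(1) gx w(2)] .
      then show False using inc by (simp add: incomp_def)
    next
      case False
      then have "P (cst y1) (cst x)" using nt[OF y(1,2) xX y(3)] y(1,2) by blast
      have "openin (top_of_set {0..1}) {a\<in>{0..1::real}. P g (mix a (cst y1) (cst x))}"
        using A2b ca[OF y(1)] ca[OF xX] ga by blast
      moreover have "0 \<in> {a\<in>{0..1::real}. P g (mix a (cst y1) (cst x))}" using gx by (simp add: mix_zero)
      ultimately obtain a where a: "0 < a" "a < 1" "P g (mix a (cst y1) (cst x))"
        using open_near0 by blast
      define c where "c = a *\<^sub>R y1 + (1 - a) *\<^sub>R x"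
      have cX: "c \<in> X" unfolding c_def using cv[OF y(1) xX] a by auto
      have gc: "P g (cst c)" using a(3) by (simp add: mix_cst c_def)
      have "P (mix a (cst y1) (cst x)) (mix a (cst x) (cst x))"
        using ind[OF ca[OF y(1)] ca[OF xX] xX a(1,2)] \<open>P (cst y1) (cst x)\<close> by blast
      then have cx: "P (cst c) (cst x)" by (simp only: mix_same, simp add: mix_cst c_def)
      have "P f (cst c)" using core_up[OF alg cvx a1 a2 a3 a5 fa ga wp cX xX gc cx] .
      then have "P f (cst x)" using trans[OF fa ca[OF cX] ca[OF xX]] cx by blast
      then show False using inc by (simp add: incomp_def)
    qed
  qed
  have part2: "\<not> P (cst x) f" if inc: "incomp P (cst x) g"
  proof
    assume xf: "P (cst x) f"
    show False
    proof (cases "\<exists>w\<in>X. P (cst w) (cst x)")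
      case True
      then obtain w where w: "w \<in> X" "P (cst w) (cst x)" by blast
      have "P (cst x) g" using core_down[OF alg cvx a1 a2 a3 a5 fa ga wp xX w(1) xf w(2)] .
      then show False using inc by (simp add: incomp_def)
    next
      case False
      then have "P (cst x) (cst y2)" using nt[OF y(1,2) xX y(3)] y(1,2) by blast
      have "openin (top_of_set {0..1}) {a\<in>{0..1::real}. P (mix a (cst y2) (cst x)) f}"
        using A2a ca[OF y(2)] ca[OF xX] fa by blast
      moreover have "0 \<in> {a\<in>{0..1::real}. P (mix a (cst y2) (cst x)) f}" using xf by (simp add: mix_zero)
      ultimately obtain a where a: "0 < a" "a < 1" "P (mix a (cst y2) (cst x)) f"
        using open_near0 by blast
      define c where "c = a *\<^sub>R y2 + (1 - a) *\<^sub>R x"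
      have cX: "c \<in> X" unfolding c_def using cv[OF y(2) xX] a by auto
      have cf: "P (cst c) f" using a(3) by (simp add: mix_cst c_def)
      have "P (mix a (cst x) (cst x)) (mix a (cst y2) (cst x))"
        using ind[OF ca[OF xX] ca[OF y(2)] xX a(1,2)] \<open>P (cst x) (cst y2)\<close> by blast
      then have xc: "P (cst x) (cst c)" by (simp only: mix_same, simp add: mix_cst c_def)
      have "P (cst c) g" using core_down[OF alg cvx a1 a2 a3 a5 fa ga wp cX xX cf xc] .
      then have "P (cst x) g" using trans[OF ca[OF xX] ca[OF cX] ga] xc by blast
      then show False using inc by (simp add: incomp_def)
    qed
  qed
  show ?thesis using part1 part2 by blast
qed

end
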